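(* Let $\mathbf{A}\in\mathbb{R}^{m\times n}$ with columns $\mathbf{a}_1,\dots,\mathbf{a}_n$, let $\mathbf{y}\in\mathbb{R}^m$, and let $f(\cdot\,;y):\mathbb{R}\to\mathbb{R}$ be, for each $y$, proper, lower semi-continuous, convex and differentiable with $(1/\alpha)$-Lipschitz derivative $f'$ for some $\alpha>0$. Set $F(\mathbf{z};\mathbf{y})=\sum_{i=1}^m f(z_i;y_i)$ for $\mathbf{z}\in\mathbb{R}^m$ and let $\nabla F(\mathbf{z};\mathbf{y})$ denote its gradient with respect to $\mathbf{z}$. Consider the non-negative linear regression problem $$\mathbf{x}^\star\in\arg\min_{\mathbf{x}\in\mathbb{R}^n,\ \mathbf{x}\ge 0}\ \sum_{i=1}^m f([\mathbf{A}\mathbf{x}]_i;y_i)$$ and its dual $$\boldsymbol{\theta}^\star=\arg\max_{\boldsymbol{\theta}\in\mathcal{F}_D}\ -\sum_{i=1}^m f^*(-\theta_i;y_i),\qquad \mathcal{F}_D=\{\boldsymbol{\theta}\in\mathbb{R}^m:\mathbf{A}^T\boldsymbol{\theta}\le 0\},$$ where $f^*(\cdot\,;y)$ is the Fenchel conjugate of $f(\cdot\,;y)$. Assume the interior $\mathrm{Int}(\mathcal{F}_D)$ is nonempty and fix $\mathbf{t}\in\mathrm{Int}(\mathcal{F}_D)$. Define $\Xi_{\mathbf{t}}:\mathbb{R}^m\to\mathbb{R}^m$ by $$\Xi_{\mathbf{t}}(\mathbf{z})=\mathbf{z}+\Big(\max_{j\in[n]}\frac{\max(0,\mathbf{a}_j^T\mathbf{z})}{|\mathbf{a}_j^T\mathbf{t}|}\Big)\mathbf{t},$$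 and $\Theta(\mathbf{x})=\Xi_{\mathbf{t}}(-\nabla F(\mathbf{A}\mathbf{x};\mathbf{y}))$. Then for any primal point $\mathbf{x}\in\mathbb{R}^n_{\ge 0}$ we have $\Theta(\mathbf{x})\in\mathcal{F}_D$. Moreover, $\Theta(\mathbf{x})\to\boldsymbol{\theta}^\star$ as $\mathbf{x}\to\mathbf{x}^\star$.
   Context: $[n]=\{1,\dots,n\}$; vector inequalities are coordinate-wise. $f^*(u;y)=\sup_{z\in\mathbb{R}} zu-f(z;y)$. The dual solution $\boldsymbol{\theta}^\star$ is unique; $\mathbf{x}^\star$ denotes a primal solution. $\mathrm{Int}(\mathcal{F}_D)$ is the topological interior of $\mathcal{F}_D$ in $\mathbb{R}^m$. *)

theory Defs
  imports "HOL-Analysis.Analysis"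
begin

definition fconj :: "(real \<Rightarrow> real \<Rightarrow> real) \<Rightarrow> real \<Rightarrow> real \<Rightarrow> ereal" where
  "fconj f u y = (SUP z. ereal (z * u - f z y))"

definition primal_obj :: "(real \<Rightarrow> real \<Rightarrow> real) \<Rightarrow> real^'n^'m \<Rightarrow> real^'m \<Rightarrow> real^'n \<Rightarrow> real" where
  "primal_obj f A y x = (\<Sum>i\<in>UNIV. f ((A *v x) $ i) (y $ i))"

definition dual_obj :: "(real \<Rightarrow> real \<Rightarrow> real) \<Rightarrow> real^'m \<Rightarrow> real^'m \<Rightarrow> ereal" where
  "dual_obj f y \<theta> = - (\<Sum>i\<in>UNIV. fconj f (- (\<theta> $ i)) (y $ i))"

definition dual_feas :: "real^'n^'m \<Rightarrow> (real^'m) set" where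
  "dual_feas A = {\<theta>. \<forall>j. (transpose A *v \<theta>) $ j \<le> 0}"

definition gradF :: "(real \<Rightarrow> real \<Rightarrow> real) \<Rightarrow> real^'m \<Rightarrow> real^'m \<Rightarrow> real^'m" where
  "gradF f' z y = (\<chi> i. f' (z $ i) (y $ i))"

definition Xi :: "real^'n^'m \<Rightarrow> real^'m \<Rightarrow> real^'m \<Rightarrow> real^'m" where
  "Xi A t z = z + (Max (range (\<lambda>j::'n. max 0 (column j A \<bullet> z) / \<bar>column j A \<bullet> t\<bar>))) *\<^sub>R t"

definition Theta :: "real^'n^'m \<Rightarrow> real^'m \<Rightarrow> (real \<Rightarrow> real \<Rightarrow> real) \<Rightarrow> real^'m \<Rightarrow> real^'n \<Rightarrow> real^'m" where
  "Theta A y f' t x = Xi A t (- gradF f' (A *v x) y)"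

end

theory Submission imports Defs begin

lemma col_inner: "(transpose A *v \<theta>) $ j = column j A \<bullet> (\<theta>::real^'m)" for A :: "real^'n^'m"
  by (simp add: matrix_vector_mult_def transpose_def column_def inner_vec_def mult.commute)

lemma feas_iff: "\<theta> \<in> dual_feas A \<longleftrightarrow> (\<forall>j. column j A \<bullet> \<theta> \<le> 0)" for A :: "real^'n^'m"
  unfolding dual_feas_def by (simp only: mem_Collect_eq col_inner)

lemma inner_Amul: "\<eta> \<bullet> (A *v x) = (transpose A *v \<eta>) \<bullet> (x::real^'n)" for A :: "real^'n^'m"
  by (metis dot_lmul_matrix inner_commute vector_transpose_matrix)

lemma int_neg:
  fixes A :: "real^'n^'m"
  assumes "t \<in> interior (dual_feas A)" "column j A \<noteq> 0"
  shows "column j A \<bullet> t < 0"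
proof -
  obtain e where e: "e > 0" "ball t e \<subseteq> dual_feas A"
    using assms(1) by (meson mem_interior)
  define c where "c = column j A"
  have nc: "norm c > 0" using assms(2) c_def by simp
  define th where "th = t + (e/2/norm c) *\<^sub>R c"
  have "dist t th < e" using e nc by (simp add: th_def dist_norm)
  hence "th \<in> dual_feas A" using e by auto
  hence "c \<bullet> th \<le> 0" unfolding feas_iff c_def by simp
  moreover have "c \<bullet> th = c \<bullet> t + (e/2/norm c) * (norm c)^2"
    by (simp add: th_def inner_add_right power2_norm_eq_inner)
  moreover have "(e/2/norm c) * (norm c)^2 > 0" using e nc by simp
  ultimately show ?thesis unfolding c_def by linarith
qed

lemma Max_ge:
  fixes g :: "'n::finite \<Rightarrow> real"
  shows "g j \<le> Max (range g)"
  by (simp add: Max_ge)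

lemma Xi_feas:
  fixes A :: "real^'n^'m"
  assumes "t \<in> interior (dual_feas A)"
  shows "Xi A t z \<in> dual_feas A"
  unfolding feas_iff
proof
  fix j
  define c where "c = column j A"
  define M where "M = Max (range (\<lambda>j::'n. max 0 (column j A \<bullet> z) / \<bar>column j A \<bullet> t\<bar>))"
  have "Xi A t z = z + M *\<^sub>R t" unfolding Xi_def M_def ..
  hence eq: "c \<bullet> Xi A t z = c \<bullet> z + M * (c \<bullet> t)" by (simp add: inner_add_right)
  show "column j A \<bullet> Xi A t z \<le> 0"
  proof (cases "c = 0")
    case True thus ?thesis using eq c_def by simp
  next
    case False
    hence neg: "c \<bullet> t < 0" using int_neg[OF assms] c_def by blast
    have "max 0 (c \<bullet> z) / \<bar>c \<bullet> t\<bar> \<le> M" unfolding M_def c_def by (rule Max_ge)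
    moreover have pos: "\<bar>c \<bullet> t\<bar> > 0" using neg by simp
    ultimately have "max 0 (c \<bullet> z) \<le> M * \<bar>c \<bullet> t\<bar>" by (simp add: pos_divide_le_eq)
    moreover have "M * \<bar>c \<bullet> t\<bar> = - (M * (c \<bullet> t))" using neg by simp
    moreover have "c \<bullet> z \<le> max 0 (c \<bullet> z)" by simp
    ultimately have "c \<bullet> z + M * (c \<bullet> t) \<le> 0" by linarith
    thus ?thesis using eq c_def by simp
  qed
qed

lemma tangent:
  assumes "convex_on UNIV g" "DERIV g c :> d"
  shows "g x - g c \<ge> d * (x - c)"
  using convex_on_imp_above_tangent[of UNIV g c x d] assms by simp

lemma fconj_at:
  assumes "convex_on UNIV (\<lambda>z. f z yy)" "((\<lambda>w. f w yy) has_real_derivative d) (at c)"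
  shows "fconj f d yy = ereal (c * d - f c yy)"
  unfolding fconj_def
proof (rule antisym)
  show "(SUP z. ereal (z * d - f z yy)) \<le> ereal (c * d - f c yy)"
  proof (rule SUP_least)
    fix z
    have "f z yy - f c yy \<ge> d * (z - c)" using tangent[OF assms] .
    thus "ereal (z * d - f z yy) \<le> ereal (c * d - f c yy)" by (simp add: algebra_simps)
  qed
  show "ereal (c * d - f c yy) \<le> (SUP z. ereal (z * d - f z yy))"
    by (rule SUP_upper) simp
qed

lemma fconj_ge: "ereal (c * u - f c yy) \<le> fconj f u yy"
  unfolding fconj_def by (rule SUP_upper) simp

theorem proposition1:
  fixes A :: "real^'n^'m" and y :: "real^'m"
    and f f' :: "real \<Rightarrow> real \<Rightarrow> real" and \<alpha> :: real
    and xstar :: "real^'n" and thetastar t :: "real^'m"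
  assumes alpha_pos: "\<alpha> > 0"
    and f_convex: "\<And>yy. convex_on UNIV (\<lambda>z. f z yy)"
    and f_deriv: "\<And>yy z. ((\<lambda>w. f w yy) has_real_derivative f' z yy) (at z)"
    and f'_lip: "\<And>yy z w. \<bar>f' z yy - f' w yy\<bar> \<le> (1 / \<alpha>) * \<bar>z - w\<bar>"
    and xstar_nonneg: "\<forall>j. xstar $ j \<ge> 0"
    and xstar_min: "\<And>x. \<forall>j. x $ j \<ge> 0 \<Longrightarrow> primal_obj f A y xstar \<le> primal_obj f A y x"
    and thetastar_argmax: "{\<theta> \<in> dual_feas A. \<forall>\<eta>\<in>dual_feas A. dual_obj f y \<eta> \<le> dual_obj f y \<theta>} = {thetastar}"
    and t_int: "t \<in> interior (dual_feas A)"
  shows "(\<forall>x::real^'n. (\<forall>j. x $ j \<ge> 0) \<longrightarrow> Theta A y f' t x \<in> dual_feas A)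
       \<and> (Theta A y f' t \<longlongrightarrow> thetastar) (at xstar within {x. \<forall>j. x $ j \<ge> 0})"
proof
  show "\<forall>x::real^'n. (\<forall>j. x $ j \<ge> 0) \<longrightarrow> Theta A y f' t x \<in> dual_feas A"
    unfolding Theta_def using Xi_feas[OF t_int] by blast
next
  define z where "z = A *v xstar"
  define \<theta>0 where "\<theta>0 = - gradF f' z y"
  have th0: "\<theta>0 $ i = - f' (z $ i) (y $ i)" for i by (simp add: \<theta>0_def gradF_def)
  define D where "D j = (\<Sum>i\<in>UNIV. f' (z $ i) (y $ i) * A $ i $ j)" for j
  have gdef: "primal_obj f A y (xstar + s *\<^sub>R axis j 1) = (\<Sum>i\<in>UNIV. f (z $ i + s * A $ i $ j) (y $ i))" for s j
  proof -
    have "A *v (xstar + s *\<^sub>R axis j 1) = z + s *\<^sub>R column j A"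
      by (simp add: z_def matrix_vector_right_distrib matrix_vector_mult_scaleR matrix_vector_mult_basis)
    thus ?thesis by (simp add: primal_obj_def column_def)
  qed
  have gder: "DERIV (\<lambda>s. \<Sum>i\<in>UNIV. f (z $ i + s * A $ i $ j) (y $ i)) 0 :> D j" for j
    unfolding D_def
  proof (rule DERIV_sum)
    fix i
    have "DERIV (\<lambda>s. z $ i + s * A $ i $ j) 0 :> A $ i $ j" by (auto intro!: derivative_eq_intros)
    from DERIV_chain2[OF f_deriv this] show "DERIV (\<lambda>s. f (z $ i + s * A $ i $ j) (y $ i)) 0 :> f' (z $ i) (y $ i) * A $ i $ j"
      by simp
  qed
  have Dnn: "D j \<ge> 0" for j
  proof (rule ccontr)
    assume "\<not> D j \<ge> 0"
    then obtain d where d: "d > 0" "\<forall>h>0. h < d \<longrightarrow> (\<Sum>i\<in>UNIV. f (z $ i + h * A $ i $ j) (y $ i)) < (\<Sum>i\<in>UNIV. f (z $ i + 0 * A $ i $ j) (y $ i))"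
      using DERIV_neg_dec_right[OF gder[of j]] by force
    have "(\<Sum>i\<in>UNIV. f (z $ i + (d/2) * A $ i $ j) (y $ i)) < (\<Sum>i\<in>UNIV. f (z $ i + 0 * A $ i $ j) (y $ i))"
      using d(2)[rule_format, of "d/2"] d(1) by simp
    hence "primal_obj f A y (xstar + (d/2) *\<^sub>R axis j 1) < primal_obj f A y (xstar + 0 *\<^sub>R axis j 1)"
      by (simp only: gdef)
    moreover have "primal_obj f A y xstar \<le> primal_obj f A y (xstar + (d/2) *\<^sub>R axis j 1)"
      using xstar_nonneg d by (intro xstar_min) (auto simp: axis_def)
    ultimately show False by simp
  qed
  have Dz: "xstar $ j * D j = 0" for j
  proof (cases "xstar $ j = 0")
    case False
    hence xp: "xstar $ j > 0" using xstar_nonneg by (metis order_le_neq_trans)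
    have "D j = 0"
    proof (rule ccontr)
      assume "D j \<noteq> 0"
      hence "D j > 0" using Dnn[of j] by simp
      then obtain d where d: "d > 0" "\<forall>h>0. h < d \<longrightarrow> (\<Sum>i\<in>UNIV. f (z $ i + (0 - h) * A $ i $ j) (y $ i)) < (\<Sum>i\<in>UNIV. f (z $ i + 0 * A $ i $ j) (y $ i))"
        using DERIV_pos_inc_left[OF gder[of j]] by force
      define h where "h = min (d/2) (xstar $ j)"
      have h: "h > 0" "h < d" "h \<le> xstar $ j" using d xp by (auto simp: h_def)
      have "(\<Sum>i\<in>UNIV. f (z $ i + (0 - h) * A $ i $ j) (y $ i)) < (\<Sum>i\<in>UNIV. f (z $ i + 0 * A $ i $ j) (y $ i))"
        using d(2)[rule_format, of h] h by simp
      hence "primal_obj f A y (xstar + (0 - h) *\<^sub>R axis j 1) < primal_obj f A y (xstar + 0 *\<^sub>R axis j 1)"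
        by (simp only: gdef)
      moreover have "primal_obj f A y xstar \<le> primal_obj f A y (xstar + (0 - h) *\<^sub>R axis j 1)"
        using xstar_nonneg h by (intro xstar_min) (auto simp: axis_def)
      ultimately show False by simp
    qed
    thus ?thesis by simp
  qed simp
  have ATth0: "(transpose A *v \<theta>0) $ j = - D j" for j
    by (simp add: matrix_vector_mult_def transpose_def th0 D_def sum_negf[symmetric] mult.commute)
  have th0_feas: "\<theta>0 \<in> dual_feas A"
    unfolding dual_feas_def using ATth0 Dnn by (simp only: mem_Collect_eq) (metis neg_le_0_iff_le)
  have cs: "\<theta>0 \<bullet> z = 0"
  proof -
    have "\<theta>0 \<bullet> z = (transpose A *v \<theta>0) \<bullet> xstar" unfolding z_def by (rule inner_Amul)
    also have "\<dots> = (\<Sum>j\<in>UNIV. - (xstar $ j * D j))"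
      by (simp only: inner_vec_def ATth0) (simp add: mult.commute)
    also have "\<dots> = 0" by (simp add: Dz)
    finally show ?thesis .
  qed
  define P where "P = primal_obj f A y xstar"
  have Pz: "P = (\<Sum>i\<in>UNIV. f (z $ i) (y $ i))" by (simp add: P_def primal_obj_def z_def)
  have dual_le: "dual_obj f y \<eta> \<le> ereal P" if "\<eta> \<in> dual_feas A" for \<eta>
  proof -
    have "(\<Sum>i\<in>UNIV. ereal (z $ i * (- (\<eta> $ i)) - f (z $ i) (y $ i))) \<le> (\<Sum>i\<in>UNIV. fconj f (- (\<eta> $ i)) (y $ i))"
      by (rule sum_mono) (rule fconj_ge)
    moreover have "(\<Sum>i\<in>UNIV. ereal (z $ i * (- (\<eta> $ i)) - f (z $ i) (y $ i))) = ereal (- (\<eta> \<bullet> z) - P)"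
      by (simp add: sum_ereal Pz inner_vec_def sum_subtractf sum_negf mult.commute)
    moreover have "\<eta> \<bullet> z \<le> 0"
    proof -
      have "\<eta> \<bullet> z = (transpose A *v \<eta>) \<bullet> xstar" unfolding z_def by (rule inner_Amul)
      also have "\<dots> = (\<Sum>j\<in>UNIV. (transpose A *v \<eta>) $ j * xstar $ j)" by (simp add: inner_vec_def)
      also have "\<dots> \<le> 0"
        using that xstar_nonneg unfolding dual_feas_def
        by (intro sum_nonpos) (simp add: mult_nonpos_nonneg)
      finally show ?thesis .
    qed
    ultimately have S: "ereal (- P) \<le> (\<Sum>i\<in>UNIV. fconj f (- (\<eta> $ i)) (y $ i))"
      by (metis (no_types) order_trans ereal_less_eq(3) diff_mono order_refl neg_0_le_iff_le diff_0)
    have "dual_obj f y \<eta> \<le> - ereal (- P)"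
      unfolding dual_obj_def using S by (simp only: ereal_minus_le_minus)
    thus ?thesis by simp
  qed
  have dual_th0: "dual_obj f y \<theta>0 = ereal P"
  proof -
    have "(\<Sum>i\<in>UNIV. fconj f (- (\<theta>0 $ i)) (y $ i)) = (\<Sum>i\<in>UNIV. ereal (z $ i * (- (\<theta>0 $ i)) - f (z $ i) (y $ i)))"
    proof (rule sum.cong)
      fix i
      show "fconj f (- (\<theta>0 $ i)) (y $ i) = ereal (z $ i * (- (\<theta>0 $ i)) - f (z $ i) (y $ i))"
        unfolding th0 minus_minus by (rule fconj_at[OF f_convex f_deriv])
    qed simp
    also have "\<dots> = ereal (- (\<theta>0 \<bullet> z) - P)"
      by (simp add: sum_ereal Pz inner_vec_def sum_subtractf sum_negf mult.commute)
    finally show ?thesis unfolding dual_obj_def cs by simp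
  qed
  have "\<theta>0 \<in> {\<theta> \<in> dual_feas A. \<forall>\<eta>\<in>dual_feas A. dual_obj f y \<eta> \<le> dual_obj f y \<theta>}"
    using th0_feas dual_le dual_th0 by auto
  hence th0_eq: "\<theta>0 = thetastar" using thetastar_argmax by blast
  show "(Theta A y f' t \<longlongrightarrow> thetastar) (at xstar within {x. \<forall>j. x $ j \<ge> 0})"
  proof -
    let ?F = "at xstar within {x::real^'n. \<forall>j. x $ j \<ge> 0}"
    have fc: "isCont (\<lambda>w. f' w yy) w" for yy w
    proof -
      have "(1/\<alpha>)-lipschitz_on UNIV (\<lambda>w. f' w yy)"
        by (rule lipschitz_onI) (use f'_lip alpha_pos in \<open>auto simp: dist_real_def\<close>)
      hence "continuous_on UNIV (\<lambda>w. f' w yy)" by (rule lipschitz_on_continuous_on)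
      thus ?thesis by (simp add: continuous_on_eq_continuous_at)
    qed
    define w where "w x = - gradF f' (A *v x) y" for x
    have Ax: "((\<lambda>x. A *v x) \<longlongrightarrow> z) ?F"
      unfolding z_def by (intro isCont_tendsto_compose[OF matrix_vector_mult_linear_continuous_at] tendsto_ident_at)
    have wt: "(w \<longlongrightarrow> \<theta>0) ?F"
      unfolding w_def \<theta>0_def gradF_def
      by (intro tendsto_minus tendsto_vec_lambda isCont_tendsto_compose[OF fc] tendsto_vec_nth Ax)
    define g where "g j x = max 0 (column j A \<bullet> w x) / \<bar>column j A \<bullet> t\<bar>" for j x
    define M where "M x = Max (range (\<lambda>j. g j x))" for x
    have Th: "Theta A y f' t x = w x + M x *\<^sub>R t" for x
      unfolding Theta_def Xi_def M_def g_def w_def ..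
    have gt: "((\<lambda>x. g j x) \<longlongrightarrow> 0) ?F" for j
    proof -
      have "column j A \<bullet> \<theta>0 \<le> 0" using th0_feas feas_iff by blast
      hence "max 0 (column j A \<bullet> \<theta>0) = 0" by simp
      moreover have "((\<lambda>x. max 0 (column j A \<bullet> w x)) \<longlongrightarrow> max 0 (column j A \<bullet> \<theta>0)) ?F"
        by (intro tendsto_intros wt)
      ultimately show ?thesis unfolding g_def by (metis tendsto_divide_zero)
    qed
    have g0: "g j x \<ge> 0" for j x unfolding g_def by simp
    have Mt: "(M \<longlongrightarrow> 0) ?F"
    proof (rule tendsto_sandwich[of "\<lambda>x. 0" _ _ "\<lambda>x. \<Sum>j\<in>UNIV. g j x"])
      show "\<forall>\<^sub>F x in ?F. 0 \<le> M x"
        by (intro always_eventually allI) (metis M_def Max_ge g0 order_trans)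
      show "\<forall>\<^sub>F x in ?F. M x \<le> (\<Sum>j\<in>UNIV. g j x)"
      proof (intro always_eventually allI)
        fix x
        obtain k where "M x = g k x"
        proof -
          have "M x \<in> range (\<lambda>j. g j x)" unfolding M_def by (rule Max_in) auto
          thus ?thesis using that by blast
        qed
        thus "M x \<le> (\<Sum>j\<in>UNIV. g j x)"
          using member_le_sum[of k UNIV "\<lambda>j. g j x"] g0 by simp
      qed
      show "((\<lambda>x. 0) \<longlongrightarrow> 0) ?F" by simp
      show "((\<lambda>x. \<Sum>j\<in>UNIV. g j x) \<longlongrightarrow> 0) ?F"
        using tendsto_sum[of UNIV "\<lambda>j x. g j x" "\<lambda>j. 0", OF gt] by simp
    qed
    have "((\<lambda>x. w x + M x *\<^sub>R t) \<longlongrightarrow> \<theta>0 + 0 *\<^sub>R t) ?F"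
      by (intro tendsto_intros wt Mt)
    hence "(Theta A y f' t \<longlongrightarrow> \<theta>0) ?F" by (simp add: Th[abs_def])
    thus ?thesis using th0_eq by simp
  qed
qed

end
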